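(* Let $(p,f)$ be an SCF-RT that is rationalizable within the class of symmetric RUM-CFs, and let $(x,y)\in C\setminus D$. If there exists $z\in X$ such that $t(x,z)$ and $t(y,z)$ are defined and $t(x,z)\leq t(y,z)$, or $t(z,x)$ and $t(z,y)$ are defined and $t(z,x)\geq t(z,y)$, then every symmetric RUM-CF $(u,g,r)$ rationalizing $(p,f)$ satisfies $u(x)\geq u(y)$. If there exists $z\in X$ with $t(x,z)<t(y,z)$ or $t(z,x)>t(z,y)$ (the respective quantities being defined), then every such model satisfies $u(x)>u(y)$.
   Context: $X$ is a finite set of options; $C=\{(x,y): x,y\in X,\ x\neq y\}$; $D\subseteq C$ is a fixed non-empty set with $(x,y)\in D\Rightarrow (y,x)\in D$. An SCF $p$ assigns to each $(x,y)\in D$ a number $p(x,y)>0$ with $p(x,y)+p(y,x)=1$. An SCF-RT is a pair $(p,f)$ where $p$ is an SCF and $f$ assigns to each $(x,y)\in D$ a strictly positive density $f(x,y)$ on $\mathbb{R}^+$ with cdf $F(x,y)$. A RUM is a pair $(u,g)$ with $u:X\to\mathbb{R}$ and $g$ assigning to each $(x,y)\in C$ a density $g(x,y)$ on $\mathbb{R}$ (cdf $G(x,y)$) with $\int v\,g(x,y)(v)\,dv=u(x)-u(y)=:v(x,y)$, $g(x,y)(v)=g(y,x)(-v)$ for all $v$, and connected support. A RUM-CF is $(u,g,r)$ with $(u,g)$ a RUM and $r:\mathbb{R}^{++}\to\mathbb{R}^+$ continuous, strictly decreasing where $r(v)>0$, $\lim_{v\to0}r(v)=\infty$, $\lim_{v\to\infty}r(v)=0$;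 $r^{-1}(t)$ ($t>0$) is the inverse of $r$ restricted to $\{r>0\}$. It rationalizes $(p,f)$ if for all $(x,y)\in D$: $G(x,y)(0)=p(y,x)$ and $\frac{1-G(x,y)(r^{-1}(t))}{1-G(x,y)(0)}=F(x,y)(t)$ for all $t>0$. A RUM-CF is symmetric if each $g(x,y)$, $(x,y)\in C$, is symmetric around its mean: $g(x,y)(v(x,y)+\delta)=g(x,y)(v(x,y)-\delta)$ for all $\delta\geq0$. For $(a,b)\in D$ with $p(a,b)>p(b,a)$, $t(a,b)>0$ is defined by $F(a,b)(t(a,b))=p(b,a)/p(a,b)$; it is undefined otherwise. *)

theory Defs
  imports "HOL-Analysis.Analysis"
begin

text \<open>Options are the elements of a finite type 'a (so X = UNIV).
  Pairs of distinct options: C.\<close>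

definition pairsC :: "('a \<times> 'a) set" where
  "pairsC = {(x, y). x \<noteq> y}"

definition valid_domain :: "('a \<times> 'a) set \<Rightarrow> bool" where
  "valid_domain D \<longleftrightarrow> D \<subseteq> pairsC \<and> D \<noteq> {} \<and> (\<forall>x y. (x, y) \<in> D \<longrightarrow> (y, x) \<in> D)"

definition is_SCF :: "('a \<times> 'a) set \<Rightarrow> ('a \<Rightarrow> 'a \<Rightarrow> real) \<Rightarrow> bool" where
  "is_SCF D p \<longleftrightarrow> (\<forall>x y. (x, y) \<in> D \<longrightarrow> p x y > 0 \<and> p x y + p y x = 1)"

definition pos_density :: "(real \<Rightarrow> real) \<Rightarrow> bool" where
  "pos_density h \<longleftrightarrow> (\<forall>t\<ge>0. h t > 0) \<and> set_integrable lborel {0..} h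
     \<and> set_lebesgue_integral lborel {0..} h = 1"

definition cdf_pos :: "(real \<Rightarrow> real) \<Rightarrow> real \<Rightarrow> real" where
  "cdf_pos h t = set_lebesgue_integral lborel {0..t} h"

definition is_SCF_RT :: "('a \<times> 'a) set \<Rightarrow> ('a \<Rightarrow> 'a \<Rightarrow> real) \<Rightarrow> ('a \<Rightarrow> 'a \<Rightarrow> real \<Rightarrow> real) \<Rightarrow> bool" where
  "is_SCF_RT D p f \<longleftrightarrow> is_SCF D p \<and> (\<forall>x y. (x, y) \<in> D \<longrightarrow> pos_density (f x y))"

definition real_density :: "(real \<Rightarrow> real) \<Rightarrow> bool" where
  "real_density h \<longleftrightarrow> h \<in> borel_measurable lborel \<and> (\<forall>v. h v \<ge> 0) \<and> integrable lborel h
     \<and> integral\<^sup>L lborel h = 1"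

definition cdf_real :: "(real \<Rightarrow> real) \<Rightarrow> real \<Rightarrow> real" where
  "cdf_real h v = set_lebesgue_integral lborel {..v} h"

definition dens_support :: "(real \<Rightarrow> real) \<Rightarrow> real set" where
  "dens_support h = closure {v. h v > 0}"

definition is_RUM :: "('a \<Rightarrow> real) \<Rightarrow> ('a \<Rightarrow> 'a \<Rightarrow> real \<Rightarrow> real) \<Rightarrow> bool" where
  "is_RUM u g \<longleftrightarrow> (\<forall>x y. (x, y) \<in> pairsC \<longrightarrow>
       real_density (g x y)
     \<and> integrable lborel (\<lambda>v. v * g x y v)
     \<and> (\<integral>v. v * g x y v \<partial>lborel) = u x - u y
     \<and> (\<forall>v. g x y v = g y x (- v))
     \<and> connected (dens_support (g x y)))"

definition is_CF :: "(real \<Rightarrow> real) \<Rightarrow> bool" where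
  "is_CF r \<longleftrightarrow> (\<forall>v>0. r v \<ge> 0) \<and> continuous_on {0<..} r
     \<and> (\<forall>v w. 0 < v \<and> v < w \<and> r v > 0 \<and> r w > 0 \<longrightarrow> r w < r v)
     \<and> filterlim r at_top (at_right 0)
     \<and> (r \<longlongrightarrow> 0) at_top"

definition rinv :: "(real \<Rightarrow> real) \<Rightarrow> real \<Rightarrow> real" where
  "rinv r t = (THE v. v > 0 \<and> r v > 0 \<and> r v = t)"

definition is_RUM_CF :: "('a \<Rightarrow> real) \<Rightarrow> ('a \<Rightarrow> 'a \<Rightarrow> real \<Rightarrow> real) \<Rightarrow> (real \<Rightarrow> real) \<Rightarrow> bool" where
  "is_RUM_CF u g r \<longleftrightarrow> is_RUM u g \<and> is_CF r"

definition rationalizes ::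
  "('a \<times> 'a) set \<Rightarrow> ('a \<Rightarrow> real) \<Rightarrow> ('a \<Rightarrow> 'a \<Rightarrow> real \<Rightarrow> real) \<Rightarrow> (real \<Rightarrow> real)
   \<Rightarrow> ('a \<Rightarrow> 'a \<Rightarrow> real) \<Rightarrow> ('a \<Rightarrow> 'a \<Rightarrow> real \<Rightarrow> real) \<Rightarrow> bool" where
  "rationalizes D u g r p f \<longleftrightarrow> is_RUM_CF u g r \<and>
     (\<forall>x y. (x, y) \<in> D \<longrightarrow>
        cdf_real (g x y) 0 = p y x \<and>
        (\<forall>t>0. (1 - cdf_real (g x y) (rinv r t)) / (1 - cdf_real (g x y) 0) = cdf_pos (f x y) t))"

definition symmetric_RUM_CF :: "('a \<Rightarrow> real) \<Rightarrow> ('a \<Rightarrow> 'a \<Rightarrow> real \<Rightarrow> real) \<Rightarrow> (real \<Rightarrow> real) \<Rightarrow> bool" where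
  "symmetric_RUM_CF u g r \<longleftrightarrow> is_RUM_CF u g r \<and>
     (\<forall>x y. (x, y) \<in> pairsC \<longrightarrow>
        (\<forall>\<delta>\<ge>0. g x y (u x - u y + \<delta>) = g x y (u x - u y - \<delta>)))"

definition tval :: "('a \<times> 'a) set \<Rightarrow> ('a \<Rightarrow> 'a \<Rightarrow> real) \<Rightarrow> ('a \<Rightarrow> 'a \<Rightarrow> real \<Rightarrow> real)
   \<Rightarrow> 'a \<Rightarrow> 'a \<Rightarrow> real option" where
  "tval D p f a b = (if (a, b) \<in> D \<and> p a b > p b a
     then Some (THE t. t > 0 \<and> cdf_pos (f a b) t = p b a / p a b) else None)"

end

theory Submission
  imports Defs
begin

lemma dens_ind_int:
  assumes "real_density h" "A \<in> sets borel"
  shows "integrable lborel (\<lambda>x. indicator A x * h x)"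
proof -
  have "integrable lborel h" using assms unfolding real_density_def by auto
  then show ?thesis using assms(2) integrable_mult_indicator[of A lborel h] by simp
qed

lemma cdf_mono:
  assumes "real_density h" "a \<le> b"
  shows "cdf_real h a \<le> cdf_real h b"
proof -
  have i1: "integrable lborel (\<lambda>x. indicator {..a} x * h x)" by (rule dens_ind_int[OF assms(1)]) simp
  have i2: "integrable lborel (\<lambda>x. indicator {..b} x * h x)" by (rule dens_ind_int[OF assms(1)]) simp
  have nn: "\<And>x. h x \<ge> 0" using assms(1) unfolding real_density_def by auto
  have "\<And>x. indicator {..a} x * h x \<le> indicator {..b} x * h x"
    using nn assms(2) by (auto simp: indicator_def)
  then have "(\<integral>x. indicator {..a} x * h x \<partial>lborel) \<le> (\<integral>x. indicator {..b} x * h x \<partial>lborel)"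
    using i1 i2 by (intro integral_mono) auto
  then show ?thesis unfolding cdf_real_def set_lebesgue_integral_def by simp
qed

lemma cdf_reflect:
  assumes "real_density h" "\<And>w. h w = h (2*m - w)"
  shows "cdf_real h (2*m) = 1 - cdf_real h 0"
proof -
  have i1: "integrable lborel (\<lambda>x. indicator {..<0} x * h x)" by (rule dens_ind_int[OF assms(1)]) simp
  have i0: "integrable lborel (\<lambda>x. indicator {..0} x * h x)" by (rule dens_ind_int[OF assms(1)]) simp
  have ih: "integrable lborel h" "integral\<^sup>L lborel h = 1" using assms(1) unfolding real_density_def by auto
  have "(\<integral>x. indicator {..2*m} x * h x \<partial>lborel) = (\<integral>x. indicator {..2*m} (2*m + (-1)*x) * h (2*m + (-1)*x) \<partial>lborel)"
    by (subst lborel_integral_real_affine[where c="-1" and t="2*m"]) auto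
  also have "\<dots> = (\<integral>x. indicator {0..} x * h x \<partial>lborel)"
  proof (rule Bochner_Integration.integral_cong)
    fix x :: real
    have "h (2*m + -1*x) = h x" using assms(2)[of x] by simp
    then show "indicator {..2*m} (2*m + (-1)*x) * h (2*m + (-1)*x) = indicator {0..} x * h x"
      by (simp add: indicator_def)
  qed simp
  also have "\<dots> = (\<integral>x. h x - indicator {..<0} x * h x \<partial>lborel)"
    by (rule Bochner_Integration.integral_cong) (auto simp: indicator_def)
  also have "\<dots> = (\<integral>x. h x \<partial>lborel) - (\<integral>x. indicator {..<0} x * h x \<partial>lborel)"
    using ih(1) i1 by (rule Bochner_Integration.integral_diff)
  also have "(\<integral>x. indicator {..<0} x * h x \<partial>lborel) = (\<integral>x. indicator {..0} x * h x \<partial>lborel)"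
    using borel_measurable_integrable[OF i1] borel_measurable_integrable[OF i0]
    by (intro integral_cong_AE) (auto intro: AE_mp[OF AE_lborel_singleton[of 0]] simp: indicator_def)
  finally show ?thesis using ih(2) unfolding cdf_real_def set_lebesgue_integral_def by simp
qed

lemma cdfpos_HK:
  assumes "pos_density h" "0 \<le> t"
  shows "cdf_pos h t = integral {0..t} h" "h integrable_on {0..t}"
proof -
  have si: "set_integrable lborel {0..} h" using assms(1) unfolding pos_density_def by blast
  have "set_integrable lborel {0..t} h" by (rule set_integrable_subset[OF si]) auto
  then show "cdf_pos h t = integral {0..t} h" "h integrable_on {0..t}"
    unfolding cdf_pos_def
    by (rule set_borel_integral_eq_integral(2), rule set_borel_integral_eq_integral(1))
qed

lemma cdfpos_strict:
  assumes "pos_density h" "0 \<le> s" "s < t"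
  shows "cdf_pos h s < cdf_pos h t"
proof -
  have si: "set_integrable lborel {0..} h" and hp: "\<And>t. t \<ge> 0 \<Longrightarrow> h t > 0"
    using assms unfolding pos_density_def by auto
  have i1: "integrable lborel (\<lambda>x. indicator A x * h x)" if "A \<subseteq> {0..}" "A \<in> sets borel" for A
    using set_integrable_subset[OF si, of A] that unfolding set_integrable_def by auto
  have "cdf_pos h t = (\<integral>x. indicator {0..s} x * h x + indicator {s<..t} x * h x \<partial>lborel)"
    unfolding cdf_pos_def set_lebesgue_integral_def
    by (rule Bochner_Integration.integral_cong) (use assms in \<open>auto split: split_indicator\<close>)
  also have "\<dots> = cdf_pos h s + (\<integral>x. indicator {s<..t} x * h x \<partial>lborel)"
    unfolding cdf_pos_def set_lebesgue_integral_def using assms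
    by (subst Bochner_Integration.integral_add) (auto intro!: i1)
  finally have eq: "cdf_pos h t = cdf_pos h s + (\<integral>x. indicator {s<..t} x * h x \<partial>lborel)" .
  have pw: "\<And>x. 0 \<le> indicator {s<..t} x * h x"
    using assms hp by (auto simp: indicator_def intro: less_imp_le)
  have nn: "0 \<le> (\<integral>x. indicator {s<..t} x * h x \<partial>lborel)"
    using pw by (intro Bochner_Integration.integral_nonneg) auto
  have "(\<integral>x. indicator {s<..t} x * h x \<partial>lborel) \<noteq> 0"
  proof
    assume "(\<integral>x. indicator {s<..t} x * h x \<partial>lborel) = 0"
    then have "AE x in lborel. indicator {s<..t} x * h x = 0"
      using pw assms by (subst (asm) integral_nonneg_eq_0_iff_AE) (auto intro!: i1)
    then have "AE x in lborel. x \<notin> {s<..t}"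
    proof (rule eventually_mono)
      fix x assume x0: "indicator {s<..t} x * h x = 0"
      show "x \<notin> {s<..t}"
      proof
        assume xin: "x \<in> {s<..t}"
        then have "h x > 0" using hp[of x] assms by simp
        then show False using x0 xin by simp
      qed
    qed
    then have "emeasure lborel {s<..t} = 0"
      by (subst (asm) AE_iff_measurable[of "{s<..t}"]) auto
    then show False using assms by simp
  qed
  then show ?thesis using eq nn by linarith
qed

lemma cdfpos_small:
  assumes "pos_density h" "e > 0"
  shows "\<exists>t>0. cdf_pos h t < e"
proof -
  have c: "continuous_on {0..1} (\<lambda>x. integral {0..x} h)"
    using cdfpos_HK(2)[OF assms(1), of 1] indefinite_integral_continuous_1 by auto
  then have "((\<lambda>x. integral {0..x} h) \<longlongrightarrow> integral {0..0} h) (at 0 within {0..1})"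
    unfolding continuous_on_def by (meson atLeastAtMost_iff order_refl zero_le_one)
  then have "((\<lambda>x. integral {0..x} h) \<longlongrightarrow> 0) (at 0 within {0..1})" by simp
  then have "\<forall>\<^sub>F x in at 0 within {0..1}. integral {0..x} h < e"
    using assms(2) order_tendstoD(2) by blast
  then obtain d where d: "d > 0" "\<And>x. x \<in> {0..1} \<Longrightarrow> x \<noteq> 0 \<Longrightarrow> dist x 0 < d \<Longrightarrow> integral {0..x} h < e"
    unfolding eventually_at by auto
  define x where "x = min (d/2) 1"
  have "x > 0" "x \<in> {0..1}" "dist x 0 < d" using d by (auto simp: x_def dist_real_def)
  then show ?thesis using d(2)[of x] cdfpos_HK(1)[OF assms(1), of x] by auto
qed

lemma cf_facts:
  assumes "is_CF r"
  shows "\<And>v. v > 0 \<Longrightarrow> r v \<ge> 0" "continuous_on {0<..} r"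
    "\<And>v w. 0 < v \<Longrightarrow> v < w \<Longrightarrow> r v > 0 \<Longrightarrow> r w > 0 \<Longrightarrow> r w < r v"
    "filterlim r at_top (at_right 0)" "(r \<longlongrightarrow> 0) at_top"
proof -
  have X: "(\<forall>v>0. r v \<ge> 0) \<and> continuous_on {0<..} r
     \<and> (\<forall>v w. 0 < v \<and> v < w \<and> r v > 0 \<and> r w > 0 \<longrightarrow> r w < r v)
     \<and> filterlim r at_top (at_right 0) \<and> (r \<longlongrightarrow> 0) at_top"
    using assms unfolding is_CF_def .
  note A = X[THEN conjunct1] and B = X[THEN conjunct2, THEN conjunct1]
    and C = X[THEN conjunct2, THEN conjunct2, THEN conjunct1]
    and D = X[THEN conjunct2, THEN conjunct2, THEN conjunct2, THEN conjunct1]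
    and E = X[THEN conjunct2, THEN conjunct2, THEN conjunct2, THEN conjunct2]
  show "\<And>v. v > 0 \<Longrightarrow> r v \<ge> 0" using A by simp
  show "continuous_on {0<..} r" by (rule B)
  show "\<And>v w. 0 < v \<Longrightarrow> v < w \<Longrightarrow> r v > 0 \<Longrightarrow> r w > 0 \<Longrightarrow> r w < r v" using C by blast
  show "filterlim r at_top (at_right 0)" by (rule D)
  show "(r \<longlongrightarrow> 0) at_top" by (rule E)
qed

lemma cf_dec:
  assumes "is_CF r" "0 < v" "v < w" "r v > 0" "r w > 0"
  shows "r w < r v"
  using cf_facts(3)[OF assms(1)] assms(2-5) by blast

lemma cf_near0:
  assumes "is_CF r" "b0 > 0"
  shows "\<exists>s. 0 < s \<and> s < b0 \<and> r s > c"
proof -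
  have "filterlim r at_top (at_right 0)" by (rule cf_facts(4)[OF assms(1)])
  then have "\<forall>\<^sub>F x in at_right 0. c + 1 \<le> r x" by (simp add: filterlim_at_top)
  then have "\<forall>\<^sub>F x in at_right 0. c < r x" by (rule eventually_mono) simp
  then obtain b where b: "b > 0" "\<And>y. 0 < y \<Longrightarrow> y < b \<Longrightarrow> c < r y"
    unfolding eventually_at_right_field by auto
  define s where "s = min (b/2) (b0/2)"
  show ?thesis using b assms(2) by (intro exI[of _ s]) (auto simp: s_def)
qed

lemma cf_down:
  assumes cf: "is_CF r" "0 < s" "s < w" "r w > 0"
  shows "r s > 0"
proof (rule ccontr)
  assume "\<not> r s > 0"
  then have rs: "r s \<le> 0" by simp
  obtain s' where s': "0 < s'" "s' < s" "r s' > r w" using cf_near0[OF cf(1) cf(2)] by blast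
  have cont: "continuous_on {s'..s} r"
    using s' by (intro continuous_on_subset[OF cf_facts(2)[OF cf(1)]]) auto
  obtain q where q: "s' \<le> q" "q \<le> s" "r q = r w"
    using IVT2'[of r s "r w" s', OF _ _ _ cont] rs s' cf(4) by auto
  have "r w < r q" using cf_dec[OF cf(1), of q w] q s' cf by auto
  then show False using q by simp
qed

lemma cf_exists:
  assumes cf: "is_CF r" "t > 0"
  shows "\<exists>w>0. r w = t"
proof -
  have "(r \<longlongrightarrow> 0) at_top" by (rule cf_facts(5)[OF cf(1)])
  then have "\<forall>\<^sub>F x in at_top. r x < t" using cf(2) order_tendstoD(2) by blast
  then obtain N where N: "\<And>n. n \<ge> N \<Longrightarrow> r n < t" unfolding eventually_at_top_linorder by auto
  define B where "B = max N 1"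
  have B: "B > 0" "r B < t" using N by (auto simp: B_def)
  obtain s' where s': "0 < s'" "s' < B" "r s' > t" using cf_near0[OF cf(1) B(1)] by blast
  have cont: "continuous_on {s'..B} r"
    using s' by (intro continuous_on_subset[OF cf_facts(2)[OF cf(1)]]) auto
  obtain q where q: "s' \<le> q" "q \<le> B" "r q = t"
    using IVT2'[of r B t s', OF _ _ _ cont] B s' by auto
  then show ?thesis using s' by (intro exI[of _ q]) auto
qed

lemma rinv_r:
  assumes "is_CF r" "w > 0" "r w > 0"
  shows "rinv r (r w) = w"
  unfolding rinv_def
proof (rule the_equality)
  fix v assume v: "0 < v \<and> 0 < r v \<and> r v = r w"
  show "v = w"
  proof (rule ccontr)
    assume "v \<noteq> w"
    then consider "v < w" | "w < v" by linarith
    then show False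
      using cf_dec[OF assms(1), of v w] cf_dec[OF assms(1), of w v] v assms by cases auto
  qed
qed (use assms in auto)

lemma rinv_prop:
  assumes "is_CF r" "t > 0"
  shows "rinv r t > 0 \<and> r (rinv r t) = t"
proof -
  obtain w where w: "w > 0" "r w = t" using cf_exists[OF assms] by blast
  then show ?thesis using rinv_r[OF assms(1), of w] assms by auto
qed

lemma key:
  assumes vd: "valid_domain D" and rt: "is_SCF_RT D p f"
    and sy: "symmetric_RUM_CF u g r" and ra: "rationalizes D u g r p f"
    and tv: "tval D p f a b = Some t"
  shows "u a > u b \<and> r (2*(u a - u b)) = t \<and> t > 0"
proof -
  have ab: "(a, b) \<in> D" and pg: "p a b > p b a"
    using tv unfolding tval_def by (metis option.distinct(1))+
  have "tval D p f a b = Some (THE t. t > 0 \<and> cdf_pos (f a b) t = p b a / p a b)"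
    unfolding tval_def using ab pg by simp
  then have tdef: "t = (THE t. t > 0 \<and> cdf_pos (f a b) t = p b a / p a b)"
    using tv by simp
  have abC: "(a, b) \<in> pairsC" using vd ab unfolding valid_domain_def by auto
  have ba: "(b, a) \<in> D" using vd ab unfolding valid_domain_def by blast
  have sum1: "p a b + p b a = 1" and pba: "p b a > 0"
    using rt ab ba unfolding is_SCF_RT_def is_SCF_def by auto
  have pd: "pos_density (f a b)" using rt ab unfolding is_SCF_RT_def by auto
  have cf: "is_CF r" using sy unfolding symmetric_RUM_CF_def is_RUM_CF_def by auto
  have rd: "real_density (g a b)"
    using sy abC unfolding symmetric_RUM_CF_def is_RUM_CF_def is_RUM_def by auto
  have G0: "cdf_real (g a b) 0 = p b a"
    and rat: "\<And>t. t > 0 \<Longrightarrow> (1 - cdf_real (g a b) (rinv r t)) / (1 - cdf_real (g a b) 0) = cdf_pos (f a b) t"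
  proof -
    have RA: "\<forall>x y. (x, y) \<in> D \<longrightarrow> cdf_real (g x y) 0 = p y x \<and>
        (\<forall>t>0. (1 - cdf_real (g x y) (rinv r t)) / (1 - cdf_real (g x y) 0) = cdf_pos (f x y) t)"
      using ra unfolding rationalizes_def by blast
    show "cdf_real (g a b) 0 = p b a" using RA ab by blast
    show "\<And>t. t > 0 \<Longrightarrow> (1 - cdf_real (g a b) (rinv r t)) / (1 - cdf_real (g a b) 0) = cdf_pos (f a b) t"
      using RA ab by blast
  qed
  define m where "m = u a - u b"
  have symg: "\<forall>\<delta>\<ge>0. g a b (m + \<delta>) = g a b (m - \<delta>)"
    using sy abC unfolding symmetric_RUM_CF_def m_def by auto
  have refl: "\<And>w. g a b w = g a b (2*m - w)"
  proof -
    fix w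
    show "g a b w = g a b (2*m - w)"
    proof (cases "w \<ge> m")
      case True
      then show ?thesis using symg[rule_format, of "w - m"] by simp
    next
      case False
      then show ?thesis using symg[rule_format, of "m - w"] by simp
    qed
  qed
  have G2m: "cdf_real (g a b) (2*m) = p a b"
    using cdf_reflect[OF rd refl] G0 sum1 by simp
  have mpos: "m > 0"
  proof (rule ccontr)
    assume "\<not> m > 0"
    then have "cdf_real (g a b) (2*m) \<le> cdf_real (g a b) 0" by (intro cdf_mono[OF rd]) simp
    then show False using G2m G0 pg by simp
  qed
  have pab: "p a b > 0" using pg pba by simp
  have om: "1 - p b a = p a b" using sum1 by simp
  define \<rho> where "\<rho> = p b a / p a b"
  have rhopos: "\<rho> > 0" using pab pba by (simp add: \<rho>_def)
  have r2m: "r (2*m) > 0"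
  proof (rule ccontr)
    assume neg: "\<not> r (2*m) > 0"
    obtain t0 where t0: "t0 > 0" "cdf_pos (f a b) t0 < \<rho>" using cdfpos_small[OF pd rhopos] by blast
    define w where "w = rinv r t0"
    have w: "w > 0" "r w = t0" using rinv_prop[OF cf t0(1)] by (auto simp: w_def)
    have "w < 2*m"
    proof (rule ccontr)
      assume "\<not> w < 2*m"
      then consider "w = 2*m" | "2*m < w" by linarith
      then show False
      proof cases
        case 1 then show False using w t0 neg by simp
      next
        case 2 then show False using cf_down[OF cf, of "2*m" w] w t0 neg mpos by simp
      qed
    qed
    then have "cdf_real (g a b) w \<le> p a b" using cdf_mono[OF rd, of w "2*m"] G2m by simp
    then have "(1 - cdf_real (g a b) w) / p a b \<ge> (1 - p a b) / p a b"
      using pab by (intro divide_right_mono) auto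
    moreover have "(1 - cdf_real (g a b) w) / p a b = cdf_pos (f a b) t0"
      using rat[OF t0(1)] G0 om by (simp add: w_def)
    moreover have "(1 - p a b) / p a b = \<rho>" using sum1 by (simp add: \<rho>_def)
    ultimately show False using t0 by simp
  qed
  define ts where "ts = r (2*m)"
  have Pts: "cdf_pos (f a b) ts = \<rho>"
  proof -
    have "rinv r ts = 2*m" unfolding ts_def using rinv_r[OF cf _ r2m] mpos by simp
    then have "cdf_pos (f a b) ts = (1 - p a b) / (1 - p b a)"
      using rat[of ts] r2m G0 G2m by (simp add: ts_def)
    moreover have "1 - p a b = p b a" using sum1 by simp
    ultimately show ?thesis using om by (simp add: \<rho>_def)
  qed
  have "t = ts"
    unfolding tdef
  proof (rule the_equality)
    show "ts > 0 \<and> cdf_pos (f a b) ts = p b a / p a b" using r2m Pts by (simp add: ts_def \<rho>_def)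
  next
    fix t' assume t': "t' > 0 \<and> cdf_pos (f a b) t' = p b a / p a b"
    show "t' = ts"
    proof (rule ccontr)
      assume "t' \<noteq> ts"
      then consider "t' < ts" | "ts < t'" by linarith
      then show False
        using cdfpos_strict[OF pd, of t' ts] cdfpos_strict[OF pd, of ts t'] t' Pts r2m
        by cases (auto simp: ts_def \<rho>_def)
    qed
  qed
  then show ?thesis using mpos r2m by (simp add: m_def ts_def)
qed

theorem theorem2:
  fixes D :: "('a::finite \<times> 'a) set"
    and p :: "'a \<Rightarrow> 'a \<Rightarrow> real"
    and f :: "'a \<Rightarrow> 'a \<Rightarrow> real \<Rightarrow> real"
    and x y :: 'a
  assumes "valid_domain D"
    and "is_SCF_RT D p f"
    and "\<exists>u g r. symmetric_RUM_CF u g r \<and> rationalizes D u g r p f"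
    and "(x, y) \<in> pairsC - D"
  shows "((\<exists>z. (\<exists>a b. tval D p f x z = Some a \<and> tval D p f y z = Some b \<and> a \<le> b)
              \<or> (\<exists>a b. tval D p f z x = Some a \<and> tval D p f z y = Some b \<and> a \<ge> b))
           \<longrightarrow> (\<forall>u g r. symmetric_RUM_CF u g r \<and> rationalizes D u g r p f \<longrightarrow> u x \<ge> u y))
       \<and> ((\<exists>z. (\<exists>a b. tval D p f x z = Some a \<and> tval D p f y z = Some b \<and> a < b)
              \<or> (\<exists>a b. tval D p f z x = Some a \<and> tval D p f z y = Some b \<and> a > b))
           \<longrightarrow> (\<forall>u g r. symmetric_RUM_CF u g r \<and> rationalizes D u g r p f \<longrightarrow> u x > u y))"
proof -
  have K: "u a > u b \<and> r (2*(u a - u b)) = t \<and> t > 0"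
    if "symmetric_RUM_CF u g r" "rationalizes D u g r p f" "tval D p f a b = Some t" for u g r a b t
    using key[OF assms(1,2) that] .
  have cfr: "is_CF r" if "symmetric_RUM_CF u g r" for u g r
    using that unfolding symmetric_RUM_CF_def is_RUM_CF_def by simp
  show ?thesis
  proof (intro conjI impI allI)
    fix u g r assume ur: "symmetric_RUM_CF u g r \<and> rationalizes D u g r p f"
    have cf: "is_CF r" using cfr ur by blast
    assume "\<exists>z. (\<exists>a b. tval D p f x z = Some a \<and> tval D p f y z = Some b \<and> a \<le> b)
              \<or> (\<exists>a b. tval D p f z x = Some a \<and> tval D p f z y = Some b \<and> a \<ge> b)"
    then obtain z where "(\<exists>a b. tval D p f x z = Some a \<and> tval D p f y z = Some b \<and> a \<le> b)
              \<or> (\<exists>a b. tval D p f z x = Some a \<and> tval D p f z y = Some b \<and> a \<ge> b)" by blast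
    then show "u x \<ge> u y"
    proof
      assume "\<exists>a b. tval D p f x z = Some a \<and> tval D p f y z = Some b \<and> a \<le> b"
      then obtain a b where ab: "tval D p f x z = Some a" "tval D p f y z = Some b" "a \<le> b" by blast
      have 1: "u x > u z" "r (2*(u x - u z)) = a" "a > 0" using K[OF ur[THEN conjunct1] ur[THEN conjunct2] ab(1)] by auto
      have 2: "u y > u z" "r (2*(u y - u z)) = b" "b > 0" using K[OF ur[THEN conjunct1] ur[THEN conjunct2] ab(2)] by auto
      show ?thesis
      proof (rule ccontr)
        assume "\<not> u x \<ge> u y"
        then have "r (2*(u y - u z)) < r (2*(u x - u z))"
          using 1 2 by (intro cf_dec[OF cf]) auto
        then show False using 1 2 ab by simp
      qed
    next
      assume "\<exists>a b. tval D p f z x = Some a \<and> tval D p f z y = Some b \<and> a \<ge> b"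
      then obtain a b where ab: "tval D p f z x = Some a" "tval D p f z y = Some b" "a \<ge> b" by blast
      have 1: "u z > u x" "r (2*(u z - u x)) = a" "a > 0" using K[OF ur[THEN conjunct1] ur[THEN conjunct2] ab(1)] by auto
      have 2: "u z > u y" "r (2*(u z - u y)) = b" "b > 0" using K[OF ur[THEN conjunct1] ur[THEN conjunct2] ab(2)] by auto
      show ?thesis
      proof (rule ccontr)
        assume "\<not> u x \<ge> u y"
        then have "r (2*(u z - u x)) < r (2*(u z - u y))"
          using 1 2 by (intro cf_dec[OF cf]) auto
        then show False using 1 2 ab by simp
      qed
    qed
  next
    fix u g r assume ur: "symmetric_RUM_CF u g r \<and> rationalizes D u g r p f"
    have cf: "is_CF r" using cfr ur by blast
    assume "\<exists>z. (\<exists>a b. tval D p f x z = Some a \<and> tval D p f y z = Some b \<and> a < b)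
              \<or> (\<exists>a b. tval D p f z x = Some a \<and> tval D p f z y = Some b \<and> a > b)"
    then obtain z where "(\<exists>a b. tval D p f x z = Some a \<and> tval D p f y z = Some b \<and> a < b)
              \<or> (\<exists>a b. tval D p f z x = Some a \<and> tval D p f z y = Some b \<and> a > b)" by blast
    then show "u x > u y"
    proof
      assume "\<exists>a b. tval D p f x z = Some a \<and> tval D p f y z = Some b \<and> a < b"
      then obtain a b where ab: "tval D p f x z = Some a" "tval D p f y z = Some b" "a < b" by blast
      have 1: "u x > u z" "r (2*(u x - u z)) = a" "a > 0" using K[OF ur[THEN conjunct1] ur[THEN conjunct2] ab(1)] by auto
      have 2: "u y > u z" "r (2*(u y - u z)) = b" "b > 0" using K[OF ur[THEN conjunct1] ur[THEN conjunct2] ab(2)] by auto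
      show ?thesis
      proof (rule ccontr)
        assume "\<not> u x > u y"
        then consider "u x = u y" | "u x < u y" by linarith
        then show False
        proof cases
          case 1 then show False using \<open>r (2*(u x - u z)) = a\<close> 2 ab by simp
        next
          case 3: 2
          have "r (2*(u y - u z)) < r (2*(u x - u z))"
            using 1 2 3 by (intro cf_dec[OF cf]) auto
          then show False using 1 2 ab by simp
        qed
      qed
    next
      assume "\<exists>a b. tval D p f z x = Some a \<and> tval D p f z y = Some b \<and> a > b"
      then obtain a b where ab: "tval D p f z x = Some a" "tval D p f z y = Some b" "a > b" by blast
      have 1: "u z > u x" "r (2*(u z - u x)) = a" "a > 0" using K[OF ur[THEN conjunct1] ur[THEN conjunct2] ab(1)] by auto
      have 2: "u z > u y" "r (2*(u z - u y)) = b" "b > 0" using K[OF ur[THEN conjunct1] ur[THEN conjunct2] ab(2)] by auto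
      show ?thesis
      proof (rule ccontr)
        assume "\<not> u x > u y"
        then consider "u x = u y" | "u x < u y" by linarith
        then show False
        proof cases
          case 1 then show False using \<open>r (2*(u z - u x)) = a\<close> 2 ab by simp
        next
          case 3: 2
          have "r (2*(u z - u x)) < r (2*(u z - u y))"
            using 1 2 3 by (intro cf_dec[OF cf]) auto
          then show False using 1 2 ab by simp
        qed
      qed
    qed
  qed
qed

end
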